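(* Let $S$ be an infinite supernatural number, $\lambda$ a non-archimedean length function on $\widetilde{\mathbb Z_S}$ that grows fast enough, and $\varphi:\mathbb Z_S\to\mathbb Z_S$, $\varphi(x)=x+1$. For $f\in C_{RD}(\mathbb Z_S)$ we have $\int_{\mathbb Z_S}f\,dx=0$ if and only if there exists $g\in C_{RD}(\mathbb Z_S)$ with $f=g\circ\varphi-g$.
   Context: Odometer $\mathbb Z_S=\varprojlim\mathbb Z/s_m\mathbb Z$ for a scale $(s_m)_{m\ge1}$ (positive integers, $s_m\mid s_{m+1}$, $s_m<s_{m+1}$) with $S=\mathrm{lcm}(s_m)$ infinite; $1=(1,1,\dots)$ generates a dense cyclic subgroup; $dx$ is normalized Haar measure. $\widetilde{\mathbb Z_S}=\{z\in\mathbb C:z^s=1\text{ for some } s\mid S\}$; $\chi_z$ is the character with $\chi_z(1)=z$; $\hat f_z=\int f\chi_{\bar z}\,dx$. A non-archimedean length function is $\lambda:\widetilde{\mathbb Z_S}\to[1,\infty)$ with (i) $\lambda(z)=1$ iff $z=1$; (ii) $\lambda(z_1z_2)\le\max\{\lambda(z_1),\lambda(z_2)\}$; (iii) $\{z:\lambda(z)\le r\}$ finite for all $r\ge1$; it grows fast enough if $\lambda(z)\ge c\,(\mathrm{ord}(z))^\alpha$ for some $\alpha,c>0$ and all $z$. $\|f\|_N=\sum_z|\hat f_z|\lambda(z)^N$ and $C_{RD}(\mathbb Z_S)=\{f\in C(\mathbb Z_S):\|f\|_N<\infty\ \forall N\ge 0\}$. *)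

theory Defs
  imports "HOL-Probability.Probability"
begin

text \<open>Points of the odometer Z_S are modelled as compatible sequences of residues
  x m \<in> {0..<s m}, with x m mod s k = x k for k \<le> m, inside the space nat \<Rightarrow> int
  carrying the product topology (subspace topology on Z_S).\<close>

definition is_scale :: "(nat \<Rightarrow> nat) \<Rightarrow> bool" where
  "is_scale s \<longleftrightarrow> (\<forall>m. 0 < s m \<and> s m dvd s (Suc m) \<and> s m < s (Suc m))"

definition odometer :: "(nat \<Rightarrow> nat) \<Rightarrow> (nat \<Rightarrow> int) set" where
  "odometer s = {x. \<forall>m. 0 \<le> x m \<and> x m < int (s m) \<and> (\<forall>k\<le>m. x m mod int (s k) = x k)}"

definition odo_add :: "(nat \<Rightarrow> nat) \<Rightarrow> (nat \<Rightarrow> int) \<Rightarrow> (nat \<Rightarrow> int) \<Rightarrow> (nat \<Rightarrow> int)" where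
  "odo_add s x y = (\<lambda>m. (x m + y m) mod int (s m))"

definition odo_one :: "(nat \<Rightarrow> nat) \<Rightarrow> (nat \<Rightarrow> int)" where
  "odo_one s = (\<lambda>m. 1 mod int (s m))"

definition odo_shift :: "(nat \<Rightarrow> nat) \<Rightarrow> (nat \<Rightarrow> int) \<Rightarrow> (nat \<Rightarrow> int)" where
  "odo_shift s x = odo_add s x (odo_one s)"

text \<open>Normalized Haar measure: a translation-invariant Borel probability measure on Z_S
  (unique, so any such measure is the Haar measure).\<close>
definition is_haar :: "(nat \<Rightarrow> nat) \<Rightarrow> (nat \<Rightarrow> int) measure \<Rightarrow> bool" where
  "is_haar s \<mu> \<longleftrightarrow> prob_space \<mu> \<and> space \<mu> = odometer s
     \<and> sets \<mu> = sets (restrict_space borel (odometer s))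
     \<and> (\<forall>a\<in>odometer s. \<forall>A\<in>sets \<mu>.
           emeasure \<mu> {x\<in>odometer s. odo_add s a x \<in> A} = emeasure \<mu> A)"

text \<open>The dual group: roots of unity of order dividing S, i.e. dividing some s_m.\<close>
definition dual_odo :: "(nat \<Rightarrow> nat) \<Rightarrow> complex set" where
  "dual_odo s = {z. \<exists>m. z ^ s m = 1}"

text \<open>The character chi_z with chi_z(1) = z: chi_z(x) = z^(x_m) for any m with z^(s_m) = 1.\<close>
definition odo_char :: "(nat \<Rightarrow> nat) \<Rightarrow> complex \<Rightarrow> (nat \<Rightarrow> int) \<Rightarrow> complex" where
  "odo_char s z x = z ^ nat (x (LEAST m. z ^ s m = 1))"

definition fourier_coeff ::
  "(nat \<Rightarrow> nat) \<Rightarrow> (nat \<Rightarrow> int) measure \<Rightarrow> ((nat \<Rightarrow> int) \<Rightarrow> complex) \<Rightarrow> complex \<Rightarrow> complex" where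
  "fourier_coeff s \<mu> f z = (\<integral>x. f x * odo_char s (cnj z) x \<partial>\<mu>)"

definition root_order :: "complex \<Rightarrow> nat" where
  "root_order z = (LEAST n. 0 < n \<and> z ^ n = 1)"

definition nonarch_length :: "(nat \<Rightarrow> nat) \<Rightarrow> (complex \<Rightarrow> real) \<Rightarrow> bool" where
  "nonarch_length s l \<longleftrightarrow>
     (\<forall>z\<in>dual_odo s. 1 \<le> l z)
   \<and> (\<forall>z\<in>dual_odo s. l z = 1 \<longleftrightarrow> z = 1)
   \<and> (\<forall>z1\<in>dual_odo s. \<forall>z2\<in>dual_odo s. l (z1 * z2) \<le> max (l z1) (l z2))
   \<and> (\<forall>r\<ge>1. finite {z\<in>dual_odo s. l z \<le> r})"

definition grows_fast_enough :: "(nat \<Rightarrow> nat) \<Rightarrow> (complex \<Rightarrow> real) \<Rightarrow> bool" where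
  "grows_fast_enough s l \<longleftrightarrow>
     (\<exists>\<alpha>>0. \<exists>c>0. \<forall>z\<in>dual_odo s. c * real (root_order z) powr \<alpha> \<le> l z)"

definition C_RD ::
  "(nat \<Rightarrow> nat) \<Rightarrow> (nat \<Rightarrow> int) measure \<Rightarrow> (complex \<Rightarrow> real) \<Rightarrow> ((nat \<Rightarrow> int) \<Rightarrow> complex) set" where
  "C_RD s \<mu> l = {f. continuous_on (odometer s) f \<and>
     (\<forall>N::real\<ge>0. (\<lambda>z. norm (fourier_coeff s \<mu> f z) * l z powr N) summable_on dual_odo s)}"

end

theory Submission
  imports Defs
begin


lemma pow_mod_root: fixes z :: complex assumes "z ^ k = 1" shows "z ^ n = z ^ (n mod k)"
proof -
  have "z ^ n = z ^ (k * (n div k) + n mod k)" by simp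
  also have "\<dots> = (z ^ k) ^ (n div k) * z ^ (n mod k)" by (simp only: power_add power_mult)
  finally show ?thesis using assms by simp
qed

locale odo_ctx =
  fixes s :: "nat \<Rightarrow> nat"
  assumes scale: "is_scale s"
begin

lemma s_pos: "0 < s m" using scale unfolding is_scale_def by auto

lemma s_dvd: "k \<le> m \<Longrightarrow> s k dvd s m"
proof (induction m)
  case 0 then show ?case by simp
next
  case (Suc m)
  have "s m dvd s (Suc m)" using scale unfolding is_scale_def by auto
  then show ?case using Suc by (metis dvd_refl dvd_trans le_Suc_eq)
qed

lemma s_ge: "m < s m"
proof (induction m)
  case 0 then show ?case using s_pos by simp
next
  case (Suc m)
  have "s m < s (Suc m)" using scale unfolding is_scale_def by auto
  then show ?case using Suc by simp
qed

lemma odoD: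
  assumes "x \<in> odometer s"
  shows "0 \<le> x m" "x m < int (s m)" "k \<le> m \<Longrightarrow> x m mod int (s k) = x k"
  using assms unfolding odometer_def by auto

lemma odo_one_in: "odo_one s \<in> odometer s"
proof -
  have "(1 mod int (s m)) mod int (s k) = 1 mod int (s k)" if "k \<le> m" for k m
    using s_dvd[OF that] by (simp add: mod_mod_cancel)
  then show ?thesis using s_pos unfolding odometer_def odo_one_def by auto
qed

lemma odo_add_in:
  assumes "a \<in> odometer s" "x \<in> odometer s"
  shows "odo_add s a x \<in> odometer s"
proof -
  have "((a m + x m) mod int (s m)) mod int (s k) = (a k + x k) mod int (s k)" if "k \<le> m" for k m
  proof -
    have "((a m + x m) mod int (s m)) mod int (s k) = (a m + x m) mod int (s k)"
      using s_dvd[OF that] by (simp add: mod_mod_cancel)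
    also have "\<dots> = (a m mod int (s k) + x m mod int (s k)) mod int (s k)" by (simp add: mod_add_eq)
    also have "\<dots> = (a k + x k) mod int (s k)" using odoD(3)[OF assms(1) that] odoD(3)[OF assms(2) that] by simp
    finally show ?thesis .
  qed
  then show ?thesis using s_pos unfolding odometer_def odo_add_def by auto
qed

lemma odo_shift_in: "x \<in> odometer s \<Longrightarrow> odo_shift s x \<in> odometer s"
  unfolding odo_shift_def by (rule odo_add_in[OF _ odo_one_in])

lemma dual_pow_mono: fixes z :: complex assumes "z ^ s m = 1" "m \<le> m'" shows "z ^ s m' = 1"
proof -
  obtain q where q: "s m' = s m * q" using s_dvd[OF assms(2)] by auto
  have "z ^ s m' = (z ^ s m) ^ q" unfolding q power_mult ..
  then show ?thesis using assms(1) by simp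
qed

lemma dual_norm: assumes "z \<in> dual_odo s" shows "norm z = 1"
proof -
  obtain m where "z ^ s m = 1" using assms unfolding dual_odo_def by auto
  then have "norm (z ^ s m) = 1" by simp
  then have "norm z ^ s m = 1" unfolding norm_power .
  then have "norm z ^ s m = 1 ^ s m" by simp
  from power_eq_imp_eq_base[OF this norm_ge_zero zero_le_one s_pos] show ?thesis .
qed

lemma dual_nz: "z \<in> dual_odo s \<Longrightarrow> z \<noteq> 0" using dual_norm by force

lemma dual_cnj: assumes "z \<in> dual_odo s" shows "cnj z \<in> dual_odo s"
proof -
  obtain m where m: "z ^ s m = 1" using assms unfolding dual_odo_def by auto
  have "cnj (z ^ s m) = 1" using m by simp
  then have "cnj z ^ s m = 1" by simp
  then show ?thesis unfolding dual_odo_def by blast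
qed

lemma dual_mult: "z \<in> dual_odo s \<Longrightarrow> w \<in> dual_odo s \<Longrightarrow> z * w \<in> dual_odo s"
proof -
  assume "z \<in> dual_odo s" "w \<in> dual_odo s"
  then obtain m m' where "z ^ s m = 1" "w ^ s m' = 1" unfolding dual_odo_def by auto
  then have "z ^ s (max m m') = 1" "w ^ s (max m m') = 1" using dual_pow_mono max.cobounded1 max.cobounded2 by blast+
  then have "(z * w) ^ s (max m m') = 1" by (simp add: power_mult_distrib)
  then show ?thesis unfolding dual_odo_def by blast
qed

lemma char_eq:
  assumes "z ^ s m = 1" "x \<in> odometer s"
  shows "odo_char s z x = z ^ nat (x m)"
proof -
  define m0 where "m0 = (LEAST m. z ^ s m = 1)"
  have m0: "z ^ s m0 = 1" "m0 \<le> m" using assms(1) unfolding m0_def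
    by (rule LeastI[of "\<lambda>m. z ^ s m = 1"], rule Least_le[of "\<lambda>m. z ^ s m = 1"])
  have "nat (x m) mod s m0 = nat (x m mod int (s m0))"
    using odoD(1)[OF assms(2)] by (simp add: nat_mod_distrib)
  also have "\<dots> = nat (x m0)" using odoD(3)[OF assms(2) m0(2)] by simp
  finally have "z ^ nat (x m) = z ^ nat (x m0)" using pow_mod_root[OF m0(1), of "nat (x m)"] by simp
  then show ?thesis unfolding odo_char_def m0_def by simp
qed

lemma char_norm: assumes "z \<in> dual_odo s" "x \<in> odometer s" shows "norm (odo_char s z x) = 1"
  using dual_norm[OF assms(1)] unfolding odo_char_def by (simp add: norm_power)

lemma char_cnj: assumes "z \<in> dual_odo s" "x \<in> odometer s"
  shows "odo_char s (cnj z) x = cnj (odo_char s z x)"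
proof -
  obtain m where m: "z ^ s m = 1" using assms unfolding dual_odo_def by auto
  then have "cnj (z ^ s m) = 1" by simp
  then have "cnj z ^ s m = 1" by simp
  then show ?thesis using char_eq[OF m assms(2)] char_eq[of "cnj z" m x] assms by simp
qed

lemma char_shift:
  assumes "z \<in> dual_odo s" "x \<in> odometer s"
  shows "odo_char s z (odo_shift s x) = z * odo_char s z x"
proof -
  obtain m where m: "z ^ s m = 1" using assms unfolding dual_odo_def by auto
  have "odo_shift s x m = (x m + 1) mod int (s m)"
    unfolding odo_shift_def odo_add_def odo_one_def by (simp add: mod_add_right_eq)
  moreover have "nat ((x m + 1) mod int (s m)) = (nat (x m) + 1) mod s m"
  proof -
    have "nat ((x m + 1) mod int (s m)) = nat (x m + 1) mod nat (int (s m))"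
      using odoD(1)[OF assms(2), of m] by (intro nat_mod_distrib) auto
    also have "nat (x m + 1) = nat (x m) + 1" using odoD(1)[OF assms(2), of m] by simp
    finally show ?thesis by simp
  qed
  ultimately have "nat (odo_shift s x m) = (nat (x m) + 1) mod s m" by simp
  then have "odo_char s z (odo_shift s x) = z ^ ((nat (x m) + 1) mod s m)"
    using char_eq[OF m odo_shift_in[OF assms(2)]] by metis
  also have "\<dots> = z ^ (nat (x m) + 1)" using pow_mod_root[OF m, of "nat (x m) + 1"] by metis
  also have "\<dots> = z * odo_char s z x" unfolding char_eq[OF m assms(2)] by (rule power_Suc[unfolded Suc_eq_plus1])
  finally show ?thesis .
qed

lemma char_one: "x \<in> odometer s \<Longrightarrow> odo_char s 1 x = 1"
  using char_eq[of 1 0 x] by (metis power_one)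

end


lemma cont_coord: "continuous_on UNIV (\<lambda>x::nat \<Rightarrow> int. g (x m) :: 'b::topological_space)"
  by (rule continuous_on_compose2[of UNIV g UNIV "\<lambda>x. x m"]) auto

lemma open_fun_nbhd:
  fixes A :: "(nat \<Rightarrow> int) set"
  assumes "open A" "x \<in> A"
  shows "\<exists>m. \<forall>y. (\<forall>k\<le>m. y k = x k) \<longrightarrow> y \<in> A"
proof -
  have "openin (product_topology (\<lambda>i. euclidean) UNIV) A" using assms(1) unfolding open_fun_def .
  from product_topology_open_contains_basis[OF this assms(2)] obtain X where
    X: "x \<in> (\<Pi>\<^sub>E i\<in>UNIV. X i)" "finite {i. X i \<noteq> topspace (euclidean :: int topology)}"
       "(\<Pi>\<^sub>E i\<in>UNIV. X i) \<subseteq> A" by blast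
  define F where "F = {i. X i \<noteq> UNIV}"
  have finF: "finite F" using X(2) unfolding F_def by simp
  define m where "m = Max (insert 0 F)"
  have "y \<in> A" if y: "\<forall>k\<le>m. y k = x k" for y
  proof -
    have "y i \<in> X i" for i
    proof (cases "i \<in> F")
      case True
      then have "i \<le> m" unfolding m_def using finF by simp
      then show ?thesis using y X(1) by (auto simp: PiE_iff)
    next
      case False then show ?thesis unfolding F_def by auto
    qed
    then have "y \<in> (\<Pi>\<^sub>E i\<in>UNIV. X i)" by (auto simp: PiE_iff)
    then show ?thesis using X(3) by blast
  qed
  then show ?thesis by blast
qed

context odo_ctx begin

lemma odo_compact: "compact (odometer s)"
proof -
  define P where "P = (\<Pi>\<^sub>E m\<in>(UNIV::nat set). {0..<int (s m)})"
  define C where "C = (\<Inter>p\<in>{p. snd p \<le> fst p}. {x::nat\<Rightarrow>int. x (fst p) mod int (s (snd p)) = x (snd p)})"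
  have "compactin (product_topology (\<lambda>i. euclidean) UNIV) P"
    unfolding P_def compactin_PiE by (auto intro: finite_imp_compact)
  then have cP: "compact P" unfolding euclidean_product_topology by simp
  have cC: "closed C" unfolding C_def
    by (intro closed_INT ballI closed_Collect_eq cont_coord)
  have "odometer s = C \<inter> P"
    unfolding odometer_def C_def P_def by (auto simp: PiE_iff)
  then show ?thesis using cC cP by auto
qed

lemma cont_nbhd:
  fixes h :: "(nat \<Rightarrow> int) \<Rightarrow> 'b::metric_space"
  assumes "continuous_on (odometer s) h" "x \<in> odometer s" "0 < e"
  shows "\<exists>m. \<forall>y\<in>odometer s. y m = x m \<longrightarrow> dist (h y) (h x) < e"
proof -
  obtain A where A: "open A" "x \<in> A" "\<forall>y\<in>odometer s. y \<in> A \<longrightarrow> h y \<in> ball (h x) e"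
    using assms unfolding continuous_on_topological by (metis centre_in_ball open_ball)
  obtain m where m: "\<forall>y. (\<forall>k\<le>m. y k = x k) \<longrightarrow> y \<in> A" using open_fun_nbhd[OF A(1,2)] by blast
  have "dist (h y) (h x) < e" if "y \<in> odometer s" "y m = x m" for y
  proof -
    have "\<forall>k\<le>m. y k = x k" using odoD(3)[OF that(1)] odoD(3)[OF assms(2)] that(2) by metis
    then show ?thesis using m A(3) that(1) by (auto simp: dist_commute)
  qed
  then show ?thesis by blast
qed

lemma char_cont: "continuous_on UNIV (odo_char s z)"
  unfolding odo_char_def by (rule cont_coord)

lemma odo_add_cont: "continuous_on UNIV (odo_add s a)"
  unfolding odo_add_def
  by (intro continuous_on_coordinatewise_then_product cont_coord[of "\<lambda>t. (a _ + t) mod int (s _)"])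

lemma cont_bounded:
  fixes h :: "(nat \<Rightarrow> int) \<Rightarrow> 'b::real_normed_vector"
  assumes "continuous_on (odometer s) h"
  shows "\<exists>B. \<forall>x\<in>odometer s. norm (h x) \<le> B"
proof -
  have "compact (h ` odometer s)" by (rule compact_continuous_image[OF assms odo_compact])
  then have "bounded (h ` odometer s)" by (rule compact_imp_bounded)
  then show ?thesis unfolding bounded_iff by auto
qed

end


locale odo_haar = odo_ctx +
  fixes \<mu> :: "(nat \<Rightarrow> int) measure"
  assumes haar: "is_haar s \<mu>"
begin

lemma prob: "prob_space \<mu>" using haar unfolding is_haar_def by auto
lemma sp: "space \<mu> = odometer s" using haar unfolding is_haar_def by auto
lemma sets_eq: "sets \<mu> = sets (restrict_space borel (odometer s))" using haar unfolding is_haar_def by auto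
lemma inv: "a \<in> odometer s \<Longrightarrow> A \<in> sets \<mu> \<Longrightarrow> emeasure \<mu> {x\<in>odometer s. odo_add s a x \<in> A} = emeasure \<mu> A"
  using haar unfolding is_haar_def by auto

sublocale P: prob_space \<mu> by (rule prob)

lemma meas_cont:
  fixes h :: "(nat \<Rightarrow> int) \<Rightarrow> 'b::topological_space"
  assumes "continuous_on (odometer s) h"
  shows "h \<in> borel_measurable \<mu>"
  using borel_measurable_continuous_on_restrict[OF assms] measurable_cong_sets[OF sets_eq refl] by blast

lemma int_cont:
  fixes h :: "(nat \<Rightarrow> int) \<Rightarrow> 'b::{banach,second_countable_topology}"
  assumes "continuous_on (odometer s) h"
  shows "integrable \<mu> h"
proof -
  obtain B where B: "\<forall>x\<in>odometer s. norm (h x) \<le> B" using cont_bounded[OF assms] by blast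
  show ?thesis
    by (rule P.integrable_const_bound[of h B]) (use B sp meas_cont[OF assms] in auto)
qed

lemma add_meas:
  assumes "a \<in> odometer s"
  shows "odo_add s a \<in> measurable \<mu> \<mu>"
proof -
  have c: "continuous_on (odometer s) (odo_add s a)" using odo_add_cont continuous_on_subset by blast
  have "odo_add s a \<in> measurable (restrict_space borel (odometer s)) (restrict_space borel (odometer s))"
    by (rule measurable_restrict_space2)
       (use odo_add_in[OF assms] borel_measurable_continuous_on_restrict[OF c] in \<open>auto simp: space_restrict_space\<close>)
  then show ?thesis using measurable_cong_sets[OF sets_eq sets_eq] by blast
qed

lemma distr_add: assumes "a \<in> odometer s" shows "distr \<mu> \<mu> (odo_add s a) = \<mu>"
proof (rule measure_eqI)
  show "sets (distr \<mu> \<mu> (odo_add s a)) = sets \<mu>" by simp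
  fix A assume "A \<in> sets (distr \<mu> \<mu> (odo_add s a))"
  then have A: "A \<in> sets \<mu>" by simp
  have "emeasure (distr \<mu> \<mu> (odo_add s a)) A = emeasure \<mu> (odo_add s a -` A \<inter> space \<mu>)"
    by (rule emeasure_distr[OF add_meas[OF assms] A])
  also have "odo_add s a -` A \<inter> space \<mu> = {x\<in>odometer s. odo_add s a x \<in> A}" using sp by auto
  also have "emeasure \<mu> \<dots> = emeasure \<mu> A" by (rule inv[OF assms A])
  finally show "emeasure (distr \<mu> \<mu> (odo_add s a)) A = emeasure \<mu> A" .
qed

lemma integral_add_inv:
  fixes h :: "(nat \<Rightarrow> int) \<Rightarrow> 'b::{banach,second_countable_topology}"
  assumes "a \<in> odometer s" "h \<in> borel_measurable \<mu>"
  shows "(\<integral>x. h (odo_add s a x) \<partial>\<mu>) = (\<integral>x. h x \<partial>\<mu>)"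
  using integral_distr[OF add_meas[OF assms(1)], of h] assms(2) distr_add[OF assms(1)] by simp

lemma shift_eq: "odo_shift s = odo_add s (odo_one s)"
  unfolding odo_shift_def odo_add_def by (auto simp: add.commute)

lemma integral_shift_inv:
  fixes h :: "(nat \<Rightarrow> int) \<Rightarrow> 'b::{banach,second_countable_topology}"
  assumes "h \<in> borel_measurable \<mu>"
  shows "(\<integral>x. h (odo_shift s x) \<partial>\<mu>) = (\<integral>x. h x \<partial>\<mu>)"
  unfolding shift_eq by (rule integral_add_inv[OF odo_one_in assms])

lemma char_meas: "odo_char s z \<in> borel_measurable \<mu>"
  by (rule meas_cont) (use char_cont continuous_on_subset in blast)

lemma char_cont_odo: "continuous_on (odometer s) (odo_char s z)"
  using char_cont continuous_on_subset by blast

lemma char_integral: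
  assumes "z \<in> dual_odo s"
  shows "(\<integral>x. odo_char s z x \<partial>\<mu>) = (if z = 1 then 1 else 0)"
proof (cases "z = 1")
  case True
  have "(\<integral>x. odo_char s z x \<partial>\<mu>) = (\<integral>x. (1::complex) \<partial>\<mu>)"
    by (intro Bochner_Integration.integral_cong) (auto simp: True char_one sp)
  then show ?thesis using True P.prob_space by simp
next
  case False
  have "(\<integral>x. odo_char s z x \<partial>\<mu>) = (\<integral>x. odo_char s z (odo_shift s x) \<partial>\<mu>)"
    by (rule integral_shift_inv[OF char_meas, symmetric])
  also have "\<dots> = (\<integral>x. z * odo_char s z x \<partial>\<mu>)"
    by (rule Bochner_Integration.integral_cong[OF refl]) (use char_shift[OF assms] sp in auto)
  also have "\<dots> = z * (\<integral>x. odo_char s z x \<partial>\<mu>)" by simp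
  finally have "(1 - z) * (\<integral>x. odo_char s z x \<partial>\<mu>) = 0" by (simp add: algebra_simps)
  then show ?thesis using False by simp
qed

end


definition omg :: "nat \<Rightarrow> complex" where "omg n = exp (2 * of_real pi * \<i> / of_nat n)"

lemma omg_pow: "omg n ^ p = exp (2 * of_real pi * \<i> * of_nat p / of_nat n)"
  unfolding omg_def exp_of_nat_mult[symmetric] by (simp add: field_simps)

lemma omg_root: "0 < n \<Longrightarrow> (omg n ^ j) ^ n = 1"
  by (simp add: omg_pow complex_root_unity flip: power_mult)

lemma omg_eq: "0 < n \<Longrightarrow> p < n \<Longrightarrow> q < n \<Longrightarrow> omg n ^ p = omg n ^ q \<longleftrightarrow> p = q"
  unfolding omg_pow using complex_root_unity_eq[of n p q] by simp

lemma omg_nz: "omg n \<noteq> 0" unfolding omg_def by simp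

lemma root_sum:
  assumes "0 < n" "p < n" "q < n"
  shows "(\<Sum>j<n. (omg n ^ j) ^ p * inverse ((omg n ^ j) ^ q)) = (if p = q then of_nat n else 0)"
proof -
  define r where "r = omg n ^ p / omg n ^ q"
  have "(\<Sum>j<n. (omg n ^ j) ^ p * inverse ((omg n ^ j) ^ q)) = (\<Sum>j<n. r ^ j)"
    unfolding r_def by (intro sum.cong refl) (simp add: power_divide field_simps flip: power_mult)
  also have "\<dots> = (if p = q then of_nat n else 0)"
  proof (cases "p = q")
    case True then show ?thesis unfolding r_def using omg_nz by (simp add: sum_gp_strict)
  next
    case False
    then have "r \<noteq> 1" unfolding r_def using omg_eq[OF assms] omg_nz by simp
    moreover have "r ^ n = 1" unfolding r_def using omg_root[OF assms(1), of p] omg_root[OF assms(1), of q]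
      by (simp add: power_divide flip: power_mult)
    ultimately show ?thesis using False by (simp add: sum_gp_strict)
  qed
  finally show ?thesis .
qed

context odo_haar begin

lemma omg_dual: "omg (s m) ^ j \<in> dual_odo s"
  unfolding dual_odo_def using omg_root[OF s_pos] by blast

lemma cyl_expand:
  assumes "y \<in> odometer s" "0 \<le> a" "a < int (s m)"
  shows "(of_bool (y m = a) :: complex) =
     (\<Sum>j<s m. inverse ((omg (s m) ^ j) ^ nat a) * odo_char s (omg (s m) ^ j) y) / of_nat (s m)"
proof -
  have "(\<Sum>j<s m. inverse ((omg (s m) ^ j) ^ nat a) * odo_char s (omg (s m) ^ j) y)
      = (\<Sum>j<s m. (omg (s m) ^ j) ^ nat (y m) * inverse ((omg (s m) ^ j) ^ nat a))"
    by (intro sum.cong refl) (simp add: char_eq[OF omg_root[OF s_pos] assms(1)])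
  also have "\<dots> = (if nat (y m) = nat a then of_nat (s m) else 0)"
  proof (rule root_sum)
    show "nat (y m) < s m" using odoD(1,2)[OF assms(1), of m] by linarith
    show "nat a < s m" using assms(2,3) by linarith
  qed (rule s_pos)
  finally show ?thesis using odoD[OF assms(1), of m] assms s_pos[of m] by auto
qed

lemma cont_ofbool: "continuous_on (odometer s) (\<lambda>y. (of_bool (y m = a) :: complex))"
  using cont_coord[of "\<lambda>t. (of_bool (t = a) :: complex)" m] continuous_on_subset by blast

lemma cyl_integral:
  assumes "continuous_on (odometer s) h" "0 \<le> a" "a < int (s m)"
  shows "(\<integral>y. h y * of_bool (y m = a) \<partial>\<mu>) =
     (\<Sum>j<s m. inverse ((omg (s m) ^ j) ^ nat a) * (\<integral>y. h y * odo_char s (omg (s m) ^ j) y \<partial>\<mu>)) / of_nat (s m)"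
proof -
  have "(\<integral>y. h y * of_bool (y m = a) \<partial>\<mu>) =
     (\<integral>y. (\<Sum>j<s m. inverse ((omg (s m) ^ j) ^ nat a) * (h y * odo_char s (omg (s m) ^ j) y)) / of_nat (s m) \<partial>\<mu>)"
    by (rule Bochner_Integration.integral_cong[OF refl])
       (simp add: sp cyl_expand[OF _ assms(2,3)] sum_distrib_left sum_divide_distrib algebra_simps)
  also have "\<dots> = (\<integral>y. (\<Sum>j<s m. inverse ((omg (s m) ^ j) ^ nat a) * (h y * odo_char s (omg (s m) ^ j) y)) \<partial>\<mu>) / of_nat (s m)"
    by (rule Bochner_Integration.integral_divide_zero)
  also have "(\<integral>y. (\<Sum>j<s m. inverse ((omg (s m) ^ j) ^ nat a) * (h y * odo_char s (omg (s m) ^ j) y)) \<partial>\<mu>)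
     = (\<Sum>j<s m. (\<integral>y. inverse ((omg (s m) ^ j) ^ nat a) * (h y * odo_char s (omg (s m) ^ j) y) \<partial>\<mu>))"
    by (rule Bochner_Integration.integral_sum) (intro int_cont continuous_intros assms(1) char_cont_odo)
  also have "\<dots> = (\<Sum>j<s m. inverse ((omg (s m) ^ j) ^ nat a) * (\<integral>y. h y * odo_char s (omg (s m) ^ j) y \<partial>\<mu>))"
    by (intro sum.cong refl Bochner_Integration.integral_mult_right_zero)
  finally show ?thesis .
qed

lemma cyl_measure:
  assumes "0 \<le> a" "a < int (s m)"
  shows "(\<integral>y. of_bool (y m = a) \<partial>\<mu>) = (1 / of_nat (s m) :: complex)"
proof -
  have "(\<integral>y. of_bool (y m = a) \<partial>\<mu>) = (\<integral>y. 1 * of_bool (y m = a) \<partial>\<mu> :: complex)" by simp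
  also have "\<dots> = (\<Sum>j<s m. inverse ((omg (s m) ^ j) ^ nat a) * (\<integral>y. 1 * odo_char s (omg (s m) ^ j) y \<partial>\<mu>)) / of_nat (s m)"
    by (rule cyl_integral) (use assms in auto)
  also have "(\<Sum>j<s m. inverse ((omg (s m) ^ j) ^ nat a) * (\<integral>y. 1 * odo_char s (omg (s m) ^ j) y \<partial>\<mu>))
      = (\<Sum>j<s m. if j = 0 then 1 else 0)"
  proof (intro sum.cong refl)
    fix j assume "j \<in> {..<s m}"
    then have "omg (s m) ^ j = 1 \<longleftrightarrow> j = 0" using omg_eq[OF s_pos[of m], of j 0] s_pos[of m] by auto
    then show "inverse ((omg (s m) ^ j) ^ nat a) * (\<integral>y. 1 * odo_char s (omg (s m) ^ j) y \<partial>\<mu>) = (if j = 0 then 1 else 0)"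
      using char_integral[OF omg_dual, of m j] by auto
  qed
  also have "\<dots> = 1" using s_pos[of m] by simp
  finally show ?thesis by simp
qed

lemma uniqueness:
  assumes cont: "continuous_on (odometer s) h"
    and orth: "\<And>w. w \<in> dual_odo s \<Longrightarrow> (\<integral>y. h y * odo_char s w y \<partial>\<mu>) = 0"
    and x: "x \<in> odometer s"
  shows "h x = 0"
proof -
  have "norm (h x) \<le> e" if e: "0 < e" for e
  proof -
    obtain m where m: "\<forall>y\<in>odometer s. y m = x m \<longrightarrow> dist (h y) (h x) < e"
      using cont_nbhd[OF cont x e] by blast
    define a where "a = x m"
    have a: "0 \<le> a" "a < int (s m)" using odoD[OF x] unfolding a_def by auto
    define n where "n = s m"
    have n: "0 < n" using s_pos unfolding n_def by simp
    have I0: "(\<integral>y. h y * of_bool (y m = a) \<partial>\<mu>) = 0"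
      unfolding cyl_integral[OF cont a] using orth[OF omg_dual] by simp
    have "h x / of_nat n = h x * (\<integral>y. of_bool (y m = a) \<partial>\<mu>)"
      using cyl_measure[OF a] unfolding n_def by simp
    also have "\<dots> = (\<integral>y. h x * of_bool (y m = a) \<partial>\<mu>)" by simp
    also have "\<dots> = (\<integral>y. h x * of_bool (y m = a) \<partial>\<mu>) - (\<integral>y. h y * of_bool (y m = a) \<partial>\<mu>)"
      using I0 by simp
    also have "\<dots> = (\<integral>y. (h x - h y) * of_bool (y m = a) \<partial>\<mu>)"
      by (subst Bochner_Integration.integral_diff[symmetric])
         (auto simp: algebra_simps intro!: int_cont continuous_intros cont cont_ofbool)
    finally have eq: "h x / of_nat n = (\<integral>y. (h x - h y) * of_bool (y m = a) \<partial>\<mu>)" .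
    have "norm (h x / of_nat n) \<le> (\<integral>y. norm ((h x - h y) * of_bool (y m = a)) \<partial>\<mu>)"
      unfolding eq by (rule Bochner_Integration.integral_norm_bound)
    also have "\<dots> \<le> (\<integral>y. e * of_bool (y m = a) \<partial>\<mu>)"
    proof (rule Bochner_Integration.integral_mono)
      show "integrable \<mu> (\<lambda>y. norm ((h x - h y) * of_bool (y m = a)))"
        by (intro integrable_norm int_cont continuous_intros cont cont_ofbool)
      show "integrable \<mu> (\<lambda>y. e * of_bool (y m = a))"
        using int_cont[OF cont_coord[of "\<lambda>t. e * of_bool (t = a)" m, THEN continuous_on_subset]] by blast
      fix y assume "y \<in> space \<mu>"
      then have "y \<in> odometer s" using sp by simp
      then show "norm ((h x - h y) * of_bool (y m = a)) \<le> e * of_bool (y m = a)"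
        using m a_def by (auto simp: dist_norm norm_minus_commute less_imp_le)
    qed
    also have "(\<integral>y. e * of_bool (y m = a) \<partial>\<mu>) = e * Re (\<integral>y. of_bool (y m = a) \<partial>\<mu>)"
    proof -
      have "(\<lambda>y. (of_bool (y m = a)::complex)) = (\<lambda>y. complex_of_real (of_bool (y m = a)))" by auto
      then have "(\<integral>y. of_bool (y m = a) \<partial>\<mu>) = complex_of_real (\<integral>y. of_bool (y m = a) \<partial>\<mu>)"
        by (metis integral_complex_of_real)
      then show ?thesis by simp
    qed
    also have "\<dots> = e / n" using cyl_measure[OF a] unfolding n_def by simp
    finally have "norm (h x) / n \<le> e / n" by (simp add: norm_divide)
    then show ?thesis using n by (simp add: divide_right_mono_neg field_simps)
  qed
  then have "norm (h x) \<le> 0 + 0" by (rule field_le_epsilon) simp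
  then show ?thesis by simp
qed

end


lemma tail_small:
  fixes N :: "'a \<Rightarrow> real"
  assumes sum: "N summable_on D" and e: "0 < e"
  shows "\<exists>F. finite F \<and> F \<subseteq> D \<and> (\<forall>G. finite G \<and> F \<subseteq> G \<and> G \<subseteq> D \<longrightarrow> infsum N (D - G) < e)"
proof -
  have "((\<lambda>G. sum N G) \<longlongrightarrow> infsum N D) (finite_subsets_at_top D)" by (rule infsum_tendsto[OF sum])
  then have "\<forall>\<^sub>F G in finite_subsets_at_top D. dist (sum N G) (infsum N D) < e"
    using e by (rule tendstoD)
  then obtain F where F: "finite F" "F \<subseteq> D" "\<forall>G. finite G \<and> F \<subseteq> G \<and> G \<subseteq> D \<longrightarrow> dist (sum N G) (infsum N D) < e"
    unfolding eventually_finite_subsets_at_top by blast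
  have "infsum N (D - G) < e" if G: "finite G" "F \<subseteq> G" "G \<subseteq> D" for G
  proof -
    have "infsum N D = infsum N (G \<union> (D - G))" using G by (simp add: Un_absorb1)
    also have "\<dots> = infsum N G + infsum N (D - G)"
    proof (rule infsum_Un_disjoint)
      show "N summable_on (D - G)" by (rule summable_on_subset_banach[OF sum]) auto
    qed (use G in auto)
    finally have "infsum N (D - G) = infsum N D - sum N G" using G by simp
    then show ?thesis using F(3) G by (auto simp: dist_real_def)
  qed
  then show ?thesis using F by blast
qed

context odo_haar begin

definition fser :: "(complex \<Rightarrow> complex) \<Rightarrow> (nat \<Rightarrow> int) \<Rightarrow> complex" where
  "fser a x = infsum (\<lambda>z. a z * odo_char s z x) (dual_odo s)"

lemma term_norm: "x \<in> odometer s \<Longrightarrow> z \<in> dual_odo s \<Longrightarrow> norm (a z * odo_char s z x) = norm (a z)"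
  by (simp add: norm_mult char_norm)

lemma term_summable:
  assumes sum: "(\<lambda>z. norm (a z)) summable_on dual_odo s" and x: "x \<in> odometer s" and B: "B \<subseteq> dual_odo s"
  shows "(\<lambda>z. norm (a z * odo_char s z x)) summable_on B"
proof -
  have "(\<lambda>z. norm (a z * odo_char s z x)) summable_on dual_odo s"
    using sum by (rule summable_on_cong[THEN iffD1, rotated]) (simp add: term_norm[OF x])
  then show ?thesis using B summable_on_subset_banach by blast
qed

lemma fser_tail:
  assumes sum: "(\<lambda>z. norm (a z)) summable_on dual_odo s" and x: "x \<in> odometer s"
    and G: "finite G" "G \<subseteq> dual_odo s"
  shows "norm (fser a x - (\<Sum>z\<in>G. a z * odo_char s z x)) \<le> infsum (\<lambda>z. norm (a z)) (dual_odo s - G)"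
proof -
  let ?f = "\<lambda>z. a z * odo_char s z x"
  have D: "dual_odo s = G \<union> (dual_odo s - G)" using G by auto
  have "fser a x = infsum ?f (G \<union> (dual_odo s - G))" unfolding fser_def using D by simp
  also have "\<dots> = infsum ?f G + infsum ?f (dual_odo s - G)"
  proof (rule infsum_Un_disjoint)
    show "?f summable_on (dual_odo s - G)"
      by (rule abs_summable_summable, rule term_summable[OF sum x]) auto
  qed (use G in auto)
  finally have "fser a x - (\<Sum>z\<in>G. ?f z) = infsum ?f (dual_odo s - G)" using G by simp
  moreover have "norm (infsum ?f (dual_odo s - G)) \<le> infsum (\<lambda>z. norm (?f z)) (dual_odo s - G)"
    by (rule norm_infsum_bound) (rule term_summable[OF sum x], auto)
  moreover have "infsum (\<lambda>z. norm (?f z)) (dual_odo s - G) = infsum (\<lambda>z. norm (a z)) (dual_odo s - G)"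
    by (rule infsum_cong) (simp add: term_norm[OF x])
  ultimately show ?thesis by simp
qed

lemma fser_unif:
  assumes sum: "(\<lambda>z. norm (a z)) summable_on dual_odo s" and e: "0 < e"
  shows "\<exists>F. finite F \<and> F \<subseteq> dual_odo s \<and> (\<forall>G. finite G \<and> F \<subseteq> G \<and> G \<subseteq> dual_odo s \<longrightarrow>
            (\<forall>x\<in>odometer s. norm (fser a x - (\<Sum>z\<in>G. a z * odo_char s z x)) < e))"
proof -
  obtain F where F: "finite F" "F \<subseteq> dual_odo s"
    "\<forall>G. finite G \<and> F \<subseteq> G \<and> G \<subseteq> dual_odo s \<longrightarrow> infsum (\<lambda>z. norm (a z)) (dual_odo s - G) < e"
    using tail_small[OF sum e] by blast
  show ?thesis
  proof (intro exI conjI allI impI ballI)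
    fix G x assume G: "finite G \<and> F \<subseteq> G \<and> G \<subseteq> dual_odo s" and x: "x \<in> odometer s"
    have "norm (fser a x - (\<Sum>z\<in>G. a z * odo_char s z x)) \<le> infsum (\<lambda>z. norm (a z)) (dual_odo s - G)"
      using G by (intro fser_tail[OF sum x]) auto
    also have "\<dots> < e" using F(3) G by blast
    finally show "norm (fser a x - (\<Sum>z\<in>G. a z * odo_char s z x)) < e" .
  qed (use F in auto)
qed

lemma fser_cont:
  assumes sum: "(\<lambda>z. norm (a z)) summable_on dual_odo s"
  shows "continuous_on (odometer s) (fser a)"
proof (rule uniform_limit_theorem)
  show "\<forall>\<^sub>F G in finite_subsets_at_top (dual_odo s). continuous_on (odometer s) (\<lambda>x. \<Sum>z\<in>G. a z * odo_char s z x)"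
    by (intro always_eventually allI continuous_intros char_cont_odo)
  show "uniform_limit (odometer s) (\<lambda>G x. \<Sum>z\<in>G. a z * odo_char s z x) (fser a) (finite_subsets_at_top (dual_odo s))"
  proof (rule uniform_limitI)
    fix e :: real assume "0 < e"
    from fser_unif[OF sum this] obtain F where F: "finite F" "F \<subseteq> dual_odo s" "\<forall>G. finite G \<and> F \<subseteq> G \<and> G \<subseteq> dual_odo s \<longrightarrow>
            (\<forall>x\<in>odometer s. norm (fser a x - (\<Sum>z\<in>G. a z * odo_char s z x)) < e)" by blast
    show "\<forall>\<^sub>F G in finite_subsets_at_top (dual_odo s). \<forall>x\<in>odometer s. dist (\<Sum>z\<in>G. a z * odo_char s z x) (fser a x) < e"
      unfolding eventually_finite_subsets_at_top
      using F by (auto simp: dist_norm norm_minus_commute)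
  qed
  show "\<not> trivial_limit (finite_subsets_at_top (dual_odo s))" by simp
qed

lemma char_mult_cnj:
  assumes z: "z \<in> dual_odo s" and w: "w \<in> dual_odo s" and x: "x \<in> odometer s"
  shows "odo_char s z x * odo_char s (cnj w) x = odo_char s (z * cnj w) x"
proof -
  obtain m m' where m: "z ^ s m = 1" "w ^ s m' = 1" using z w unfolding dual_odo_def by auto
  define M where "M = max m m'"
  have zM: "z ^ s M = 1" by (rule dual_pow_mono[OF m(1)]) (simp add: M_def)
  have wM: "w ^ s M = 1" by (rule dual_pow_mono[OF m(2)]) (simp add: M_def)
  have "cnj (w ^ s M) = 1" using wM by simp
  then have cwM: "cnj w ^ s M = 1" by simp
  have zwM: "(z * cnj w) ^ s M = 1" using zM cwM by (simp add: power_mult_distrib)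
  show ?thesis
    using char_eq[OF zM x] char_eq[OF cwM x] char_eq[OF zwM x] by (simp add: power_mult_distrib)
qed

lemma char_orth:
  assumes z: "z \<in> dual_odo s" and w: "w \<in> dual_odo s"
  shows "(\<integral>x. odo_char s z x * odo_char s (cnj w) x \<partial>\<mu>) = (if z = w then 1 else 0)"
proof -
  have "(\<integral>x. odo_char s z x * odo_char s (cnj w) x \<partial>\<mu>) = (\<integral>x. odo_char s (z * cnj w) x \<partial>\<mu>)"
    by (rule Bochner_Integration.integral_cong[OF refl]) (use char_mult_cnj[OF z w] sp in auto)
  also have "\<dots> = (if z * cnj w = 1 then 1 else 0)"
    by (rule char_integral) (rule dual_mult[OF z dual_cnj[OF w]])
  also have "(z * cnj w = 1) = (z = w)"
  proof -
    have wc: "w * cnj w = 1" using dual_norm[OF w] by (simp add: complex_norm_square[symmetric])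
    show ?thesis
    proof
      assume h: "z * cnj w = 1"
      have "z = z * (w * cnj w)" using wc by simp
      also have "\<dots> = w * (z * cnj w)" by (simp add: algebra_simps)
      finally show "z = w" using h by simp
    qed (use wc in simp)
  qed
  finally show ?thesis .
qed

lemma prob_int_bound:
  fixes h :: "(nat \<Rightarrow> int) \<Rightarrow> complex"
  assumes "integrable \<mu> h" "\<And>x. x \<in> odometer s \<Longrightarrow> norm (h x) \<le> e"
  shows "norm (\<integral>x. h x \<partial>\<mu>) \<le> e"
proof -
  have "norm (\<integral>x. h x \<partial>\<mu>) \<le> (\<integral>x. norm (h x) \<partial>\<mu>)" by (rule Bochner_Integration.integral_norm_bound)
  also have "\<dots> \<le> (\<integral>x. e \<partial>\<mu>)"
    by (rule Bochner_Integration.integral_mono) (use assms sp in auto)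
  also have "\<dots> = e" using P.prob_space by simp
  finally show ?thesis .
qed

lemma fser_coeff:
  assumes sum: "(\<lambda>z. norm (a z)) summable_on dual_odo s" and w: "w \<in> dual_odo s"
  shows "(\<integral>x. fser a x * odo_char s (cnj w) x \<partial>\<mu>) = a w"
proof -
  have cf: "continuous_on (odometer s) (fser a)" by (rule fser_cont[OF sum])
  have "norm ((\<integral>x. fser a x * odo_char s (cnj w) x \<partial>\<mu>) - a w) \<le> e" if e: "0 < e" for e
  proof -
    obtain F where F: "finite F" "F \<subseteq> dual_odo s" "\<forall>G. finite G \<and> F \<subseteq> G \<and> G \<subseteq> dual_odo s \<longrightarrow>
            (\<forall>x\<in>odometer s. norm (fser a x - (\<Sum>z\<in>G. a z * odo_char s z x)) < e)"
      using fser_unif[OF sum e] by blast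
    define G where "G = insert w F"
    have G: "finite G" "F \<subseteq> G" "G \<subseteq> dual_odo s" "w \<in> G" using F w unfolding G_def by auto
    have int_term: "integrable \<mu> (\<lambda>x. a z * (odo_char s z x * odo_char s (cnj w) x))" for z
      by (intro int_cont continuous_intros char_cont_odo)
    have "(\<integral>x. (\<Sum>z\<in>G. a z * odo_char s z x) * odo_char s (cnj w) x \<partial>\<mu>)
        = (\<integral>x. (\<Sum>z\<in>G. a z * (odo_char s z x * odo_char s (cnj w) x)) \<partial>\<mu>)"
      by (simp add: sum_distrib_right mult.assoc)
    also have "\<dots> = (\<Sum>z\<in>G. (\<integral>x. a z * (odo_char s z x * odo_char s (cnj w) x) \<partial>\<mu>))"
      by (rule Bochner_Integration.integral_sum) (rule int_term)
    also have "\<dots> = (\<Sum>z\<in>G. a z * (if z = w then 1 else 0))"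
      by (intro sum.cong refl) (use G char_orth[OF _ w] in auto)
    also have "\<dots> = a w" using G by (simp add: if_distrib sum.delta cong: if_cong)
    finally have S: "(\<integral>x. (\<Sum>z\<in>G. a z * odo_char s z x) * odo_char s (cnj w) x \<partial>\<mu>) = a w" .
    have "(\<integral>x. fser a x * odo_char s (cnj w) x \<partial>\<mu>) - a w
        = (\<integral>x. (fser a x - (\<Sum>z\<in>G. a z * odo_char s z x)) * odo_char s (cnj w) x \<partial>\<mu>)"
      unfolding S[symmetric] left_diff_distrib
      by (rule Bochner_Integration.integral_diff[symmetric])
         (intro int_cont continuous_intros char_cont_odo cf)+
    also have "norm \<dots> \<le> e"
    proof (rule prob_int_bound)
      show "integrable \<mu> (\<lambda>x. (fser a x - (\<Sum>z\<in>G. a z * odo_char s z x)) * odo_char s (cnj w) x)"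
        by (intro int_cont continuous_intros char_cont_odo cf)
      fix x assume x: "x \<in> odometer s"
      have "norm (odo_char s (cnj w) x) = 1" by (rule char_norm[OF dual_cnj[OF w] x])
      then show "norm ((fser a x - (\<Sum>z\<in>G. a z * odo_char s z x)) * odo_char s (cnj w) x) \<le> e"
        using F(3) G x by (auto simp: norm_mult less_imp_le)
    qed
    finally show ?thesis .
  qed
  then have "norm ((\<integral>x. fser a x * odo_char s (cnj w) x \<partial>\<mu>) - a w) \<le> 0 + 0"
    by (rule field_le_epsilon) simp
  then show ?thesis by simp
qed

lemma inversion:
  assumes cf: "continuous_on (odometer s) f"
    and sum: "(\<lambda>z. norm (fourier_coeff s \<mu> f z)) summable_on dual_odo s"
    and x: "x \<in> odometer s"
  shows "f x = fser (fourier_coeff s \<mu> f) x"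
proof -
  let ?c = "fourier_coeff s \<mu> f"
  have cs: "continuous_on (odometer s) (fser ?c)" by (rule fser_cont[OF sum])
  have "(\<lambda>y. f y - fser ?c y) x = 0"
  proof (rule uniqueness)
    show "continuous_on (odometer s) (\<lambda>y. f y - fser ?c y)" by (intro continuous_intros cf cs)
    fix w assume w: "w \<in> dual_odo s"
    have "(\<integral>y. (f y - fser ?c y) * odo_char s w y \<partial>\<mu>)
        = (\<integral>y. f y * odo_char s w y \<partial>\<mu>) - (\<integral>y. fser ?c y * odo_char s w y \<partial>\<mu>)"
      unfolding left_diff_distrib
      by (rule Bochner_Integration.integral_diff) (intro int_cont continuous_intros char_cont_odo cf cs)+
    also have "(\<integral>y. fser ?c y * odo_char s w y \<partial>\<mu>) = ?c (cnj w)"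
      using fser_coeff[OF sum dual_cnj[OF w]] by simp
    also have "?c (cnj w) = (\<integral>y. f y * odo_char s w y \<partial>\<mu>)"
      unfolding fourier_coeff_def by simp
    finally show "(\<integral>y. (f y - fser ?c y) * odo_char s w y \<partial>\<mu>) = 0" by simp
  qed (rule x)
  then show ?thesis by simp
qed

end


lemma sin_cubic_t1: fixes w :: real shows "\<bar>sin w - (\<Sum>m<3. sin_coeff m * w ^ m)\<bar> \<le> inverse (fact 3) * \<bar>w\<bar> ^ 3"
    by (rule Maclaurin_sin_bound)
lemma sin_cubic_t2: fixes w :: real shows "(\<Sum>m<3. sin_coeff m * w ^ m) = w"
    by (simp add: numeral_3_eq_3 sin_coeff_Suc cos_coeff_Suc)
lemma sin_cubic_t3: "(fact 3 :: real) = 6" by (simp add: numeral_3_eq_3)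
lemma sin_cubic_t4: fixes w :: real assumes "0 \<le> w" "w \<le> 1" shows "w ^ 3 \<le> w"
  proof -
    have "w ^ 2 \<le> 1" by (rule power_le_one[OF assms])
    then have "w * w ^ 2 \<le> w * 1" by (rule mult_left_mono) (rule assms(1))
    then show ?thesis by (simp add: eval_nat_numeral)
  qed

lemma sin_cubic: fixes w :: real assumes "0 \<le> w" "w \<le> 1" shows "5 / 6 * w \<le> sin w"
proof -
  have aw: "\<bar>w\<bar> = w" using assms by simp
  have A: "\<bar>sin w - w\<bar> \<le> inverse 6 * w ^ 3"
    using sin_cubic_t1[of w] unfolding sin_cubic_t2 sin_cubic_t3 aw .
  have B: "inverse (6::real) * w ^ 3 = w ^ 3 / 6" by simp
  show ?thesis using A B sin_cubic_t4[OF assms] by linarith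
qed

lemma sin_lb:
  assumes "1 \<le> j" "j < n"
  shows "1 / (2 * real n) \<le> sin (pi * real j / real n)"
proof -
  define u where "u = pi * real j / real n"
  have n: "0 < real n" using assms by simp
  have u1: "pi / n \<le> u" unfolding u_def using assms n by (simp add: divide_right_mono)
  have u2: "pi / n \<le> pi - u"
  proof -
    have "pi - u = pi * real (n - j) / real n" unfolding u_def using assms n by (simp add: field_simps of_nat_diff)
    moreover have "1 \<le> real (n - j)" using assms by simp
    ultimately show ?thesis using n by (simp add: divide_right_mono)
  qed
  define v where "v = min u (pi - u)"
  have sv: "sin v = sin u" unfolding v_def by (simp add: min_def)
  have v1: "pi / n \<le> v" "v \<le> pi / 2" unfolding v_def using u1 u2 by (auto simp: min_def)
  define w where "w = min v 1"
  have "0 \<le> pi / n" using n pi_gt_zero by simp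
  then have v0: "0 \<le> v" using v1(1) by linarith
  have w: "0 \<le> w" "w \<le> 1" "w \<le> v" unfolding w_def using v0 by auto
  have "sin w \<le> sin v" by (rule sin_monotone_2pi_le) (use w v1 pi_gt_zero in linarith)+
  moreover have "5 / 6 * w \<le> sin w" by (rule sin_cubic[OF w(1,2)])
  moreover have "1 / real n \<le> w"
  proof -
    have "1 / real n \<le> pi / real n" using n pi_ge_two by (simp add: divide_right_mono)
    moreover have "1 / real n \<le> 1" using assms by simp
    ultimately have "1 / real n \<le> v" "1 / real n \<le> 1" using v1 by linarith+
    then show ?thesis unfolding w_def by simp
  qed
  ultimately have "5 / 6 * (1 / real n) \<le> sin u" using sv by linarith
  moreover have "1 / (2 * real n) \<le> 5 / 6 * (1 / real n)" using n by (simp add: field_simps)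
  ultimately show ?thesis unfolding u_def by linarith
qed

lemma root_dist:
  fixes z :: complex
  assumes "0 < n" "z ^ n = 1" "z \<noteq> 1"
  shows "1 / real n \<le> norm (z - 1)"
proof -
  have "z \<in> {z::complex. z ^ n = 1}" using assms by simp
  then obtain j where j: "j < n" "z = exp (2 * of_real pi * \<i> * of_nat j / of_nat n)"
    using complex_roots_unity[of n] assms(1) by auto
  have j1: "1 \<le> j" using j assms(3) by (cases j) auto
  define t where "t = 2 * pi * real j / real n"
  have "z = exp (\<i> * of_real t)" unfolding j(2) t_def by (simp add: field_simps)
  then have "norm (z - 1) = 2 * \<bar>sin (t / 2)\<bar>" using dist_exp_i_1 by simp
  also have "t / 2 = pi * real j / real n" unfolding t_def by simp
  finally have eq: "norm (z - 1) = 2 * \<bar>sin (pi * real j / real n)\<bar>" .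
  have "1 / (2 * real n) \<le> sin (pi * real j / real n)" by (rule sin_lb[OF j1 j(1)])
  then have "1 / (2 * real n) \<le> \<bar>sin (pi * real j / real n)\<bar>" by linarith
  then show ?thesis unfolding eq using assms(1) by (simp add: field_simps)
qed

lemma root_order_props:
  fixes z :: complex
  assumes "0 < k" "z ^ k = 1"
  shows "0 < root_order z" "z ^ root_order z = 1"
proof -
  have "0 < root_order z \<and> z ^ root_order z = 1"
    unfolding root_order_def by (rule LeastI[of "\<lambda>n. 0 < n \<and> z ^ n = 1"]) (use assms in blast)
  then show "0 < root_order z" "z ^ root_order z = 1" by auto
qed



context odo_haar begin

lemma shift_cont: "continuous_on (odometer s) (odo_shift s)"
  unfolding shift_eq using odo_add_cont continuous_on_subset by blast

lemma easy_dir: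
  assumes g: "continuous_on (odometer s) g"
    and fg: "\<forall>x\<in>odometer s. f x = g (odo_shift s x) - g x"
  shows "(\<integral>x. f x \<partial>\<mu>) = (0::complex)"
proof -
  have gs: "continuous_on (odometer s) (\<lambda>x. g (odo_shift s x))"
    by (rule continuous_on_compose2[OF g shift_cont]) (use odo_shift_in in auto)
  have "(\<integral>x. f x \<partial>\<mu>) = (\<integral>x. g (odo_shift s x) - g x \<partial>\<mu>)"
    by (rule Bochner_Integration.integral_cong[OF refl]) (use fg sp in auto)
  also have "\<dots> = (\<integral>x. g (odo_shift s x) \<partial>\<mu>) - (\<integral>x. g x \<partial>\<mu>)"
    by (rule Bochner_Integration.integral_diff) (rule int_cont[OF gs], rule int_cont[OF g])
  also have "(\<integral>x. g (odo_shift s x) \<partial>\<mu>) = (\<integral>x. g x \<partial>\<mu>)"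
    by (rule integral_shift_inv[OF meas_cont[OF g]])
  finally show ?thesis by simp
qed

lemma hard_dir:
  assumes nl: "nonarch_length s l" and gf: "grows_fast_enough s l"
    and fC: "f \<in> C_RD s \<mu> l" and f0: "(\<integral>x. f x \<partial>\<mu>) = 0"
  shows "\<exists>g\<in>C_RD s \<mu> l. \<forall>x\<in>odometer s. f x = g (odo_shift s x) - g x"
proof -
  let ?D = "dual_odo s"
  define c where "c = fourier_coeff s \<mu> f"
  have cf: "continuous_on (odometer s) f" using fC unfolding C_RD_def by auto
  have fsum: "\<And>N. 0 \<le> N \<Longrightarrow> (\<lambda>z. norm (c z) * l z powr N) summable_on ?D"
    using fC unfolding C_RD_def c_def by auto
  have l1: "\<And>z. z \<in> ?D \<Longrightarrow> 1 \<le> l z" using nl unfolding nonarch_length_def by auto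
  obtain \<alpha> c0 where ac: "0 < \<alpha>" "0 < c0" "\<And>z. z \<in> ?D \<Longrightarrow> c0 * real (root_order z) powr \<alpha> \<le> l z"
    using gf unfolding grows_fast_enough_def by auto
  have csum: "(\<lambda>z. norm (c z)) summable_on ?D"
  proof -
    have "(\<lambda>z. norm (c z) * l z powr 0) summable_on ?D" by (rule fsum) simp
    then show ?thesis
      by (rule summable_on_cong[THEN iffD1, rotated]) (use l1 in fastforce)
  qed
  have c1: "c 1 = 0"
  proof -
    have "c 1 = (\<integral>x. f x * odo_char s 1 x \<partial>\<mu>)" unfolding c_def fourier_coeff_def by simp
    also have "\<dots> = (\<integral>x. f x \<partial>\<mu>)"
      by (rule Bochner_Integration.integral_cong[OF refl]) (simp add: sp char_one)
    finally show ?thesis using f0 by simp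
  qed
  define b where "b z = c z / (z - 1)" for z
  define K where "K = 1 / c0 powr (1 / \<alpha>)"
  have K0: "0 \<le> K" unfolding K_def by simp
  have bbound: "norm (b z) \<le> K * (norm (c z) * l z powr (1 / \<alpha>))" if z: "z \<in> ?D" for z
  proof (cases "z = 1")
    case True then show ?thesis unfolding b_def using K0 by simp
  next
    case False
    obtain m where m: "z ^ s m = 1" using z unfolding dual_odo_def by auto
    note ro = root_order_props[OF s_pos m]
    define n where "n = real (root_order z)"
    have n0: "0 < n" using ro unfolding n_def by simp
    have d: "1 / n \<le> norm (z - 1)" unfolding n_def by (rule root_dist[OF ro(1) ro(2) False])
    have "n powr \<alpha> \<le> l z / c0" using ac(3)[OF z] ac(2) unfolding n_def by (simp add: field_simps)
    then have "(n powr \<alpha>) powr (1 / \<alpha>) \<le> (l z / c0) powr (1 / \<alpha>)"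
      by (rule powr_mono2[rotated 2]) (use ac in auto)
    also have "(n powr \<alpha>) powr (1 / \<alpha>) = n" using n0 ac(1) by (simp add: powr_powr)
    also have "(l z / c0) powr (1 / \<alpha>) = K * l z powr (1 / \<alpha>)"
      unfolding K_def by (simp add: powr_divide)
    finally have nK: "n \<le> K * l z powr (1 / \<alpha>)" .
    have "norm (b z) = norm (c z) / norm (z - 1)" unfolding b_def by (simp add: norm_divide)
    also have "\<dots> \<le> norm (c z) * n"
    proof -
      have "0 < norm (z - 1)" using False by simp
      then have "1 \<le> n * norm (z - 1)" using d n0 by (simp add: field_simps)
      then have "norm (c z) * 1 \<le> norm (c z) * (n * norm (z - 1))" by (rule mult_left_mono) simp
      then have "norm (c z) \<le> norm (c z) * n * norm (z - 1)" by (simp add: mult.assoc)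
      then show ?thesis using \<open>0 < norm (z - 1)\<close> by (simp add: pos_divide_le_eq)
    qed
    also have "\<dots> \<le> norm (c z) * (K * l z powr (1 / \<alpha>))" by (rule mult_left_mono[OF nK]) simp
    finally show ?thesis by (simp add: algebra_simps)
  qed
  have bsumN: "(\<lambda>z. norm (b z) * l z powr N) summable_on ?D" if N: "0 \<le> N" for N
  proof (rule summable_on_comparison_test)
    show "(\<lambda>z. K * (norm (c z) * l z powr (N + 1 / \<alpha>))) summable_on ?D"
      by (rule summable_on_cmult_right, rule fsum) (use N ac in simp)
    fix z assume z: "z \<in> ?D"
    have lz: "0 < l z" using l1[OF z] by simp
    have "norm (b z) * l z powr N \<le> K * (norm (c z) * l z powr (1 / \<alpha>)) * l z powr N"
      by (rule mult_right_mono[OF bbound[OF z]]) simp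
    also have "\<dots> = K * (norm (c z) * l z powr (N + 1 / \<alpha>))" by (simp add: powr_add algebra_simps)
    finally show "norm (b z) * l z powr N \<le> K * (norm (c z) * l z powr (N + 1 / \<alpha>))" .
    show "0 \<le> norm (b z) * l z powr N" by simp
  qed
  have bsum: "(\<lambda>z. norm (b z)) summable_on ?D"
  proof -
    have "(\<lambda>z. norm (b z) * l z powr 0) summable_on ?D" by (rule bsumN) simp
    then show ?thesis
      by (rule summable_on_cong[THEN iffD1, rotated]) (use l1 in fastforce)
  qed
  define g where "g = fser b"
  have gcont: "continuous_on (odometer s) g" unfolding g_def by (rule fser_cont[OF bsum])
  have gcoeff: "fourier_coeff s \<mu> g z = b z" if "z \<in> ?D" for z
    unfolding fourier_coeff_def g_def by (rule fser_coeff[OF bsum that])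
  have gC: "g \<in> C_RD s \<mu> l"
    unfolding C_RD_def
  proof (intro CollectI conjI allI impI gcont)
    fix N :: real assume "0 \<le> N"
    from bsumN[OF this] show "(\<lambda>z. norm (fourier_coeff s \<mu> g z) * l z powr N) summable_on ?D"
      by (rule summable_on_cong[THEN iffD1, rotated]) (simp add: gcoeff)
  qed
  have bc: "b z * (z - 1) = c z" if "z \<in> ?D" for z
    using c1 unfolding b_def by (cases "z = 1") auto
  have shift: "f x = g (odo_shift s x) - g x" if x: "x \<in> odometer s" for x
  proof -
    have "g (odo_shift s x) = infsum (\<lambda>z. b z * odo_char s z x + c z * odo_char s z x) ?D"
      unfolding g_def fser_def
    proof (rule infsum_cong)
      fix z assume z: "z \<in> ?D"
      have "b z * odo_char s z (odo_shift s x) = b z * odo_char s z x + (b z * (z - 1)) * odo_char s z x"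
        unfolding char_shift[OF z x] by (simp add: algebra_simps)
      then show "b z * odo_char s z (odo_shift s x) = b z * odo_char s z x + c z * odo_char s z x"
        unfolding bc[OF z] .
    qed
    also have "\<dots> = g x + fser c x"
      unfolding g_def fser_def
      by (rule infsum_add; rule abs_summable_summable; rule term_summable[OF _ x]) (use bsum csum in auto)
    also have "fser c x = f x" unfolding c_def using inversion[OF cf _ x] csum unfolding c_def by simp
    finally show ?thesis by simp
  qed
  show ?thesis using gC shift by blast
qed

end

theorem mainTheorem9:
  fixes s :: "nat \<Rightarrow> nat" and \<mu> :: "(nat \<Rightarrow> int) measure"
    and l :: "complex \<Rightarrow> real" and f :: "(nat \<Rightarrow> int) \<Rightarrow> complex"
  assumes "is_scale s"
    and "is_haar s \<mu>"
    and "nonarch_length s l"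
    and "grows_fast_enough s l"
    and "f \<in> C_RD s \<mu> l"
  shows "(\<integral>x. f x \<partial>\<mu>) = 0 \<longleftrightarrow>
         (\<exists>g\<in>C_RD s \<mu> l. \<forall>x\<in>odometer s. f x = g (odo_shift s x) - g x)"
proof -
  interpret odo_haar s \<mu> by unfold_locales (rule assms(1), rule assms(2))
  show ?thesis
  proof
    assume "(\<integral>x. f x \<partial>\<mu>) = 0"
    then show "\<exists>g\<in>C_RD s \<mu> l. \<forall>x\<in>odometer s. f x = g (odo_shift s x) - g x"
      by (rule hard_dir[OF assms(3,4,5)])
  next
    assume "\<exists>g\<in>C_RD s \<mu> l. \<forall>x\<in>odometer s. f x = g (odo_shift s x) - g x"
    then obtain g where g: "g \<in> C_RD s \<mu> l" "\<forall>x\<in>odometer s. f x = g (odo_shift s x) - g x" by blast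
    have "continuous_on (odometer s) g" using g(1) unfolding C_RD_def by auto
    then show "(\<integral>x. f x \<partial>\<mu>) = 0" by (rule easy_dir[OF _ g(2)])
  qed
qed


end
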